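(* Let $M\subset\mathbb{P}$ and write $\mathrm{pop}=\mathrm{pop}_M$. (1) For $\operatorname{Re}(s)>1$, $$\sum_{p\in M}p^{-s}=\sum_{n=1}^{\infty}\frac{\mu(n)}{n}\ln Z_M(ns),$$ where $\ln Z_M(w)=-\sum_{p\in M}\ln(1-p^{-w})$ with the principal branch of the logarithm. (2) For $|x|<1$ let $l_{\mathrm{pop}}(x)=\sum_{k\in\mathrm{pop}}\frac{x^k}{k}$. Then for $|x|<1$, $$\sum_{n\in\mathrm{pop}}\frac{\mu(n)}{n}\,l_{\mathrm{pop}}(x^n)=x,\qquad l_{\mathrm{pop}}(x)=\sum_{n\in\mathrm{pop}_{\mathbb{P}\setminus M}}\frac{\mu(n)}{n}\ln\frac{1}{1-x^n},$$ and consequently, for $\operatorname{Re}(s)>1$, $$\sum_{n\in\mathrm{pop}}\frac{\mu(n)}{n}\Big(\sum_{p\in M}l_{\mathrm{pop}}(p^{-ns})\Big)=\sum_{p\in M}p^{-s}.$$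
   Context: $\mathbb{P}$ is the set of primes; $\mu$ is the Möbius function. For $M\subset\mathbb{P}$, $\mathrm{pop}_M$ is the set of positive integers all of whose prime factors lie in $M$ (including $1$), and $Z_M(s)=\prod_{p\in M}(1-p^{-s})^{-1}=\sum_{n\in\mathrm{pop}_M}n^{-s}$ for $\operatorname{Re}(s)>1$. *)

theory Defs
  imports "HOL-Analysis.Analysis" "HOL-Computational_Algebra.Computational_Algebra"
begin

text \<open>Moebius function: mu(n) = (-1)^(number of prime factors) for squarefree n > 0,
  0 otherwise (and mu(0) = 0 by convention; 0 never occurs in the sums).\<close>
definition moebius :: "nat \<Rightarrow> int" where
  "moebius n = (if n > 0 \<and> squarefree n then (-1) ^ card (prime_factors n) else 0)"

definition pop :: "nat set \<Rightarrow> nat set" where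
  "pop M = {n. n > 0 \<and> prime_factors n \<subseteq> M}"

definition lnZ :: "nat set \<Rightarrow> complex \<Rightarrow> complex" where
  "lnZ M w = - (\<Sum>\<^sub>\<infinity>p\<in>M. Ln (1 - (of_nat p) powr (-w)))"

definition lpop :: "nat set \<Rightarrow> complex \<Rightarrow> complex" where
  "lpop M x = (\<Sum>\<^sub>\<infinity>k\<in>pop M. x ^ k / of_nat k)"

end

theory Submission
  imports Defs
begin

lemma sum_pow_minus_one: "finite Q \<Longrightarrow> (\<Sum>S\<in>Pow Q. (-1::int) ^ card S) = (if Q = {} then 1 else 0)"
proof -
  assume Q: "finite Q"
  have "(\<Prod>x\<in>Q. (1::int) - 1) = (\<Sum>X\<in>Pow Q. (-1) ^ card X * (\<Prod>x\<in>X. 1) * (\<Prod>x\<in>Q-X. 1))"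
    by (rule prod_diff_conv_sum[OF Q])
  moreover have "Q \<noteq> {} \<Longrightarrow> (0::int) ^ card Q = 0" using Q by (simp add: card_gt_0_iff)
  ultimately show ?thesis using Q by auto
qed

lemma sqf_prod_pf:
  fixes d :: nat assumes "d > 0" "squarefree d"
  shows "\<Prod>(prime_factors d) = d"
proof -
  have "(\<Prod>p \<in> prime_factors d. p ^ multiplicity p d) = d"
    using prod_prime_factors[of d] assms by simp
  moreover have "\<And>p. p \<in> prime_factors d \<Longrightarrow> multiplicity p d = 1"
    using squarefree_factorial_semiring'[of d] assms by simp
  ultimately show ?thesis by (metis (no_types, lifting) power_one_right prod.cong)
qed

lemma primeset_facts:
  fixes S :: "nat set" assumes "finite S" "\<And>p. p \<in> S \<Longrightarrow> prime p"
  shows "prime_factors (\<Prod>S) = S" "squarefree (\<Prod>S)" "\<Prod>S > 0"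
proof -
  have nz: "0 \<notin> id ` S" using assms(2) not_prime_0 by fastforce
  show "prime_factors (\<Prod>S) = S"
  proof -
    have "prime_factors (\<Prod>S) = \<Union>(prime_factors ` S)"
      using prime_factors_prod[OF assms(1), of id] nz by simp
    also have "prime_factors ` S = (\<lambda>p. {p}) ` S"
      by (intro image_cong refl) (simp add: prime_prime_factors assms(2))
    finally show ?thesis by simp
  qed
  show "squarefree (\<Prod>S)"
    using squarefree_prod_coprime[of S id] assms(2)
    by (simp add: primes_coprime squarefree_prime)
  show "\<Prod>S > 0" using assms by (metis nz id_apply image_eqI neq0_conv prod_pos)
qed

lemma moebius_sum_gen:
  fixes m :: nat and N :: "nat set"
  assumes "m > 0"
  shows "(\<Sum>d\<in>{d. d dvd m \<and> prime_factors d \<subseteq> N}. moebius d) = (if prime_factors m \<inter> N = {} then 1 else 0)"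
proof -
  define D where "D = {d. d dvd m \<and> prime_factors d \<subseteq> N}"
  define D' where "D' = {d\<in>D. squarefree d}"
  define Q where "Q = prime_factors m \<inter> N"
  have finD: "finite D" unfolding D_def using assms
    by (metis (no_types, lifting) finite_divisors_nat mem_Collect_eq rev_finite_subset subsetI)
  have "(\<Sum>d\<in>D. moebius d) = (\<Sum>d\<in>D'. moebius d)"
    by (rule sum.mono_neutral_right[OF finD]) (auto simp: D'_def moebius_def)
  also have "\<dots> = (\<Sum>S\<in>Pow Q. moebius (\<Prod>S))"
  proof (rule sum.reindex_bij_witness[of _ "\<lambda>S. \<Prod>S" prime_factors])
    fix d assume d: "d \<in> D'"
    then have "d > 0" "squarefree d" "d dvd m" "prime_factors d \<subseteq> N" using assms
      by (auto simp: D'_def D_def dvd_pos_nat)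
    then show "\<Prod>(prime_factors d) = d" using sqf_prod_pf by blast
    then show "moebius (\<Prod>(prime_factors d)) = moebius d" by simp
    have "prime_factors d \<subseteq> prime_factors m"
      using \<open>d dvd m\<close> assms by (intro dvd_prime_factors) auto
    then show "prime_factors d \<in> Pow Q" unfolding Q_def
      using \<open>prime_factors d \<subseteq> N\<close> by blast
  next
    fix S assume S: "S \<in> Pow Q"
    have fin: "finite S" using S unfolding Q_def by (auto intro: finite_subset)
    have pr: "\<And>p. p \<in> S \<Longrightarrow> prime p" using S unfolding Q_def by auto
    note F = primeset_facts[OF fin pr]
    show "prime_factors (\<Prod>S) = S" using F by simp
    have "\<Prod>S dvd (\<Prod>p\<in>prime_factors m. p)"
      using S unfolding Q_def by (intro prod_dvd_prod_subset) auto
    also have "\<dots> dvd (\<Prod>p\<in>prime_factors m. p ^ multiplicity p m)"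
    proof (intro prod_dvd_prod)
      fix p assume "p \<in> prime_factors m"
      then have "multiplicity p m > 0" by (simp add: prime_factors_multiplicity)
      then show "p dvd p ^ multiplicity p m" using dvd_power[of "multiplicity p m" p] by auto
    qed
    also have "\<dots> = m" using prod_prime_factors[of m] assms by simp
    finally have "\<Prod>S dvd m" .
    moreover have "prime_factors (\<Prod>S) \<subseteq> N" using F S unfolding Q_def by simp
    ultimately show "\<Prod>S \<in> D'" using F unfolding D'_def D_def by blast
  qed
  also have "\<dots> = (\<Sum>S\<in>Pow Q. (-1) ^ card S)"
  proof (rule sum.cong[OF refl])
    fix S assume S: "S \<in> Pow Q"
    have fin: "finite S" using S unfolding Q_def by (auto intro: finite_subset)
    have pr: "\<And>p. p \<in> S \<Longrightarrow> prime p" using S unfolding Q_def by auto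
    note F = primeset_facts[OF fin pr]
    show "moebius (\<Prod>S) = (-1) ^ card S" using F by (simp add: moebius_def)
  qed
  also have "\<dots> = (if Q = {} then 1 else 0)"
    by (rule sum_pow_minus_one) (simp add: Q_def)
  finally show ?thesis unfolding D_def Q_def .
qed


lemma geo1:
  fixes \<rho> :: real assumes "0 \<le> \<rho>" "\<rho> < 1"
  shows "((\<lambda>k. \<rho> ^ (k - 1)) has_sum (1 / (1 - \<rho>))) {1..}"
proof -
  have "((\<lambda>j. \<rho> ^ j) has_sum (1 / (1 - \<rho>))) UNIV"
    by (rule sums_nonneg_imp_has_sum) (use assms geometric_sums[of \<rho>] in auto)
  moreover have "((\<lambda>j. \<rho> ^ j) has_sum (1 / (1 - \<rho>))) UNIV = ((\<lambda>k. \<rho> ^ (k - 1)) has_sum (1 / (1 - \<rho>))) {1..}"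
    by (rule has_sum_reindex_bij_witness[of _ "\<lambda>k. k - 1" Suc]) auto
  ultimately show ?thesis by simp
qed

lemma bound2:
  fixes \<rho> :: real assumes "0 \<le> \<rho>" "\<rho> < 1"
  shows "(\<lambda>(n,k). \<rho> ^ (n - 1) * \<rho> ^ (k - 1)) summable_on ({1..} \<times> {1..})"
proof -
  have "(\<lambda>x. (\<lambda>(n,k). \<rho> ^ (n - 1) * \<rho> ^ (k - 1)) x) summable_on (Sigma {1..} (\<lambda>_. {1..}))"
  proof (rule summable_on_SigmaI[where g = "\<lambda>n. \<rho> ^ (n - 1) * (1 / (1 - \<rho>))"])
    fix n :: nat
    show "((\<lambda>k. (\<lambda>(n,k). \<rho> ^ (n - 1) * \<rho> ^ (k - 1)) (n, k)) has_sum \<rho> ^ (n - 1) * (1 / (1 - \<rho>))) {1..}"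
      using has_sum_cmult_right[OF geo1[OF assms], of "\<rho> ^ (n - 1)"] by simp
  next
    show "(\<lambda>n. \<rho> ^ (n - 1) * (1 / (1 - \<rho>))) summable_on {1..}"
      using has_sum_cmult_left[OF geo1[OF assms], of "1 / (1 - \<rho>)"] summable_on_def by blast
  qed (use assms in auto)
  then show ?thesis by simp
qed

lemma pow_bound:
  fixes \<rho> :: real assumes "0 \<le> \<rho>" "\<rho> \<le> 1" "n \<ge> 1" "k \<ge> 1"
  shows "\<rho> ^ (n * k) \<le> \<rho> ^ (n - 1) * \<rho> ^ (k - 1)"
proof -
  obtain a b where ab: "n = Suc a" "k = Suc b" using assms(3,4) by (metis Suc_le_D One_nat_def)
  have "(n - 1) + (k - 1) \<le> n * k" unfolding ab by simp
  then have "\<rho> ^ (n * k) \<le> \<rho> ^ ((n - 1) + (k - 1))"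
    by (rule power_decreasing) (use assms in auto)
  then show ?thesis by (simp add: power_add)
qed


lemma norm_F_bound:
  fixes z a :: complex
  assumes "norm a \<le> 1" "norm z < 1" "n \<ge> 1" "k \<ge> 1"
  shows "norm (a / of_nat (n * k) * z ^ (n * k)) \<le> norm z ^ (n - 1) * norm z ^ (k - 1)"
proof -
  have "norm (a / of_nat (n * k) * z ^ (n * k)) = norm a / real (n * k) * norm z ^ (n * k)"
    by (simp add: norm_mult norm_divide norm_power)
  also have "\<dots> \<le> 1 * norm z ^ (n * k)"
  proof (rule mult_right_mono)
    have "n * k \<ge> 1" using assms(3,4) by (metis mult_le_mono nat_mult_1)
    then have "real (n * k) \<ge> 1" by (metis of_nat_1 of_nat_le_iff)
    then show "norm a / real (n * k) \<le> 1" using assms(1)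
      by (meson divide_le_eq_1 dual_order.trans norm_ge_zero order_less_le_trans zero_less_one)
  qed simp
  also have "\<dots> \<le> norm z ^ (n - 1) * norm z ^ (k - 1)"
    using pow_bound[of "norm z" n k] assms by simp
  finally show ?thesis .
qed

lemma core:
  fixes z :: complex and a h :: "nat \<Rightarrow> complex" and A K :: "nat set"
  assumes z: "norm z < 1" and A: "A \<subseteq> {1..}" and K: "K \<subseteq> {1..}" and a: "\<And>n. norm (a n) \<le> 1"
  and hyp: "\<And>m. m \<ge> 1 \<Longrightarrow> (\<Sum>n\<in>{n\<in>A. n dvd m \<and> m div n \<in> K}. a n) = h m"
  shows "((\<lambda>(n,k). a n / of_nat (n*k) * z^(n*k)) has_sum (\<Sum>\<^sub>\<infinity>m\<in>{1..}. h m * z^m / of_nat m)) (A \<times> K)"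
proof -
  define F where "F = (\<lambda>(n,k). a n / of_nat (n*k) * z^(n*k))"
  have "(\<lambda>(n,k). norm z ^ (n - 1) * norm z ^ (k - 1)) summable_on (A \<times> K)"
    by (rule summable_on_subset[OF bound2]) (use z A K in auto)
  then have "(\<lambda>x. norm (F x)) summable_on (A \<times> K)"
  proof (rule Infinite_Sum.abs_summable_on_comparison_test')
    fix x assume "x \<in> A \<times> K"
    then obtain n k where x: "x = (n,k)" "n \<in> A" "k \<in> K" by auto
    then show "norm (F x) \<le> (\<lambda>(n,k). norm z ^ (n - 1) * norm z ^ (k - 1)) x"
      unfolding F_def using norm_F_bound[OF a z, of n k] A K by auto
  qed
  then have "F summable_on (A \<times> K)"
    using summable_on_iff_abs_summable_on_complex by blast
  then have FS: "(F has_sum infsum F (A \<times> K)) (A \<times> K)" by simp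
  define D where "D m = {n\<in>A. n dvd m \<and> m div n \<in> K}" for m
  define G where "G = (\<lambda>(m::nat, n::nat). a n / of_nat m * z ^ m)"
  have "(F has_sum infsum F (A \<times> K)) (A \<times> K) = (G has_sum infsum F (A \<times> K)) (Sigma {1..} D)"
  proof (rule has_sum_reindex_bij_witness[of _ "\<lambda>(m,n). (n, m div n)" "\<lambda>(n,k). (n*k, n)"])
    fix x assume "x \<in> A \<times> K"
    then obtain n k where x: "x = (n,k)" "n \<in> A" "k \<in> K" by auto
    have n: "n \<ge> 1" "k \<ge> 1" using x A K by auto
    show "(\<lambda>(m,n). (n, m div n)) ((\<lambda>(n,k). (n*k, n)) x) = x" using x n by auto
    show "(\<lambda>(n,k). (n*k, n)) x \<in> Sigma {1..} D" using x n by (auto simp: D_def)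
    show "G ((\<lambda>(n,k). (n*k, n)) x) = F x" using x by (simp add: G_def F_def)
  next
    fix y assume "y \<in> Sigma {1..} D"
    then obtain m n where y: "y = (m,n)" "m \<ge> 1" "n \<in> A" "n dvd m" "m div n \<in> K"
      by (auto simp: D_def)
    show "(\<lambda>(n,k). (n*k, n)) ((\<lambda>(m,n). (n, m div n)) y) = y" using y by auto
    show "(\<lambda>(m,n). (n, m div n)) y \<in> A \<times> K" using y by auto
  qed simp
  with FS have GS: "(G has_sum infsum F (A \<times> K)) (Sigma {1..} D)" by simp
  have rows: "((\<lambda>n. G (m, n)) has_sum (h m * z ^ m / of_nat m)) (D m)" if m: "m \<in> {1..}" for m
  proof -
    have fin: "finite (D m)"
      by (rule finite_subset[of _ "{d. d dvd m}"]) (use m in \<open>auto simp: D_def\<close>)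
    have "(\<Sum>n\<in>D m. G (m, n)) = (\<Sum>n\<in>D m. a n) / of_nat m * z ^ m"
      by (simp add: G_def sum_distrib_right sum_divide_distrib)
    also have "\<dots> = h m * z ^ m / of_nat m" using hyp[of m] m by (simp add: D_def)
    finally show ?thesis using has_sum_finite[OF fin, of "\<lambda>n. G (m, n)"] by simp
  qed
  have "((\<lambda>m. h m * z ^ m / of_nat m) has_sum infsum F (A \<times> K)) {1..}"
    by (rule has_sum_SigmaD[OF GS rows])
  then have "infsum F (A \<times> K) = (\<Sum>\<^sub>\<infinity>m\<in>{1..}. h m * z^m / of_nat m)"
    by (simp add: infsumI)
  with FS show ?thesis unfolding F_def by simp
qed


lemma core_rows:
  fixes z :: complex and a h :: "nat \<Rightarrow> complex" and A K :: "nat set"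
  assumes z: "norm z < 1" and A: "A \<subseteq> {1..}" and K: "K \<subseteq> {1..}" and a: "\<And>n. norm (a n) \<le> 1"
  and hyp: "\<And>m. m \<ge> 1 \<Longrightarrow> (\<Sum>n\<in>{n\<in>A. n dvd m \<and> m div n \<in> K}. a n) = h m"
  shows "((\<lambda>n. a n / of_nat n * (\<Sum>\<^sub>\<infinity>k\<in>K. (z^n)^k / of_nat k)) has_sum (\<Sum>\<^sub>\<infinity>m\<in>{1..}. h m * z^m / of_nat m)) A"
proof -
  define f where "f = (\<lambda>n k. a n / of_nat (n*k) * z^(n*k))"
  have S: "((\<lambda>(n,k). f n k) has_sum (\<Sum>\<^sub>\<infinity>m\<in>{1..}. h m * z^m / of_nat m)) (Sigma A (\<lambda>_. K))"
    using core[OF assms] unfolding f_def by simp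
  have rows: "((\<lambda>k. (\<lambda>(n,k). f n k) (n, k)) has_sum infsum (f n) K) K" if "n \<in> A" for n
    using summable_on_SigmaD1[OF has_sum_imp_summable[OF S] that] by simp
  have "((\<lambda>n. infsum (f n) K) has_sum (\<Sum>\<^sub>\<infinity>m\<in>{1..}. h m * z^m / of_nat m)) A"
    by (rule has_sum_SigmaD[OF S rows])
  moreover have "infsum (f n) K = a n / of_nat n * (\<Sum>\<^sub>\<infinity>k\<in>K. (z^n)^k / of_nat k)" for n
  proof -
    have "infsum (f n) K = (\<Sum>\<^sub>\<infinity>k\<in>K. a n / of_nat n * ((z^n)^k / of_nat k))"
      by (intro infsum_cong) (simp add: f_def power_mult)
    also have "\<dots> = a n / of_nat n * (\<Sum>\<^sub>\<infinity>k\<in>K. (z^n)^k / of_nat k)"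
      by (rule infsum_cmult_right')
    finally show ?thesis .
  qed
  ultimately show ?thesis by simp
qed

lemma pf_empty_iff: "(m::nat) > 0 \<Longrightarrow> prime_factors m = {} \<longleftrightarrow> m = 1"
  by (metis prime_factorization_empty_iff set_mset_eq_empty_iff nat_dvd_1_iff_1 neq0_conv)

lemma moeb_c:
  fixes m :: nat assumes "m > 0"
  shows "(\<Sum>d\<in>{d. d dvd m \<and> prime_factors d \<subseteq> N}. (of_int (moebius d) :: complex)) = (if prime_factors m \<inter> N = {} then 1 else 0)"
  using moebius_sum_gen[OF assms, of N] by (metis (mono_tags) of_int_0 of_int_1 of_int_sum)

lemma hyp_all:
  fixes m :: nat assumes "m \<ge> 1"
  shows "(\<Sum>n\<in>{n\<in>{1..}. n dvd m \<and> m div n \<in> {1..}}. (of_int (moebius n) :: complex)) = (if m = 1 then 1 else 0)"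
proof -
  have "{n\<in>{1..}. n dvd m \<and> m div n \<in> {1..}} = {d. d dvd m \<and> prime_factors d \<subseteq> UNIV}"
    using assms by (auto simp: dvd_pos_nat dvd_div_eq_0_iff Suc_le_eq)
  then show ?thesis using moeb_c[of m UNIV] assms pf_empty_iff[of m] by simp
qed

lemma pop_mult: "a > 0 \<Longrightarrow> b > 0 \<Longrightarrow> a * b \<in> pop M \<longleftrightarrow> a \<in> pop M \<and> b \<in> pop M"
  by (auto simp: pop_def prime_factors_product)

lemma hyp_pop:
  fixes m :: nat assumes "m \<ge> 1"
  shows "(\<Sum>n\<in>{n\<in>pop M. n dvd m \<and> m div n \<in> pop M}. (of_int (moebius n) :: complex)) = (if m = 1 then 1 else 0)"
proof (cases "m \<in> pop M")
  case True
  have "{n\<in>pop M. n dvd m \<and> m div n \<in> pop M} = {d. d dvd m \<and> prime_factors d \<subseteq> M}"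
  proof safe
    fix d assume "d dvd m" "prime_factors d \<subseteq> M"
    then have "d > 0" "m div d > 0" using assms by (auto simp: dvd_pos_nat dvd_div_eq_0_iff)
    moreover have "d * (m div d) = m" using \<open>d dvd m\<close> by simp
    ultimately show "d \<in> pop M" "m div d \<in> pop M" using True pop_mult[of d "m div d" M] by auto
  qed (auto simp: pop_def)
  moreover have "prime_factors m \<inter> M = {} \<longleftrightarrow> m = 1"
    using True pf_empty_iff[of m] assms by (auto simp: pop_def)
  ultimately show ?thesis using moeb_c[of m M] assms by simp
next
  case False
  have "\<not> (d \<in> pop M \<and> d dvd m \<and> m div d \<in> pop M)" for d
  proof (intro notI, elim conjE)
    assume "d \<in> pop M" "d dvd m" "m div d \<in> pop M"
    moreover have "d > 0" "m div d > 0" using \<open>d \<in> pop M\<close> \<open>m div d \<in> pop M\<close> by (auto simp: pop_def)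
    moreover have "d * (m div d) = m" using \<open>d dvd m\<close> by simp
    ultimately show False using False pop_mult[of d "m div d" M] by metis
  qed
  then have E: "{n\<in>pop M. n dvd m \<and> m div n \<in> pop M} = {}" by blast
  have "m \<noteq> 1" using False by (auto simp: pop_def)
  then show ?thesis unfolding E by simp
qed

lemma hyp_compl:
  fixes m :: nat and M :: "nat set" assumes "m \<ge> 1"
  shows "(\<Sum>n\<in>{n\<in>pop ({p. prime p} - M). n dvd m \<and> m div n \<in> {1..}}. (of_int (moebius n) :: complex)) = (if m \<in> pop M then 1 else 0)"
proof -
  have "{n\<in>pop ({p. prime p} - M). n dvd m \<and> m div n \<in> {1..}} = {d. d dvd m \<and> prime_factors d \<subseteq> {p. prime p} - M}"
    using assms by (auto simp: pop_def dvd_pos_nat dvd_div_eq_0_iff Suc_le_eq)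
  moreover have "prime_factors m \<inter> ({p. prime p} - M) = {} \<longleftrightarrow> m \<in> pop M"
    using assms by (auto simp: pop_def)
  ultimately show ?thesis using moeb_c[of m "{p. prime p} - M"] assms by simp
qed


lemma norm_moebius: "norm (of_int (moebius n) :: complex) \<le> 1"
  by (auto simp: moebius_def norm_power)

lemma pop_sub: "pop M \<subseteq> {1..}"
  by (auto simp: pop_def)

lemma delta_sum:
  fixes z :: complex
  shows "(\<Sum>\<^sub>\<infinity>m\<in>{1..}. (if m = 1 then 1 else 0) * z^m / of_nat m) = z"
proof -
  have "((\<lambda>m::nat. (if m = 1 then 1 else 0) * z^m / of_nat m) has_sum z) {1..}"
    by (rule has_sum_finite_neutralI[of "{1}"]) auto
  then show ?thesis by (rule infsumI)
qed

lemma log_series: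
  fixes y :: complex assumes y: "norm y < 1"
  shows "((\<lambda>k. y^k / of_nat k) has_sum Ln (1 / (1 - y))) {1..}"
proof -
  have "(\<lambda>n. - ((-(-y))^n) / of_nat n) sums Ln (1 + (-y))"
    using Ln_series'[of "-y"] y by simp
  then have "(\<lambda>n. - (- (y^n) / of_nat n)) sums (- Ln (1 - y))"
    by (intro sums_minus) simp
  then have S: "(\<lambda>n. y^n / of_nat n) sums (- Ln (1 - y))" by simp
  have "summable (\<lambda>n. norm (y^n / of_nat n))"
  proof (rule summable_comparison_test[of _ "\<lambda>n. norm y ^ n"])
    show "\<exists>N. \<forall>n\<ge>N. norm (norm (y ^ n / of_nat n)) \<le> norm y ^ n"
    proof (intro exI allI impI)
      fix n :: nat assume "n \<ge> 1"
      then have "real n \<ge> 1" by simp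
      then have "norm y ^ n / real n \<le> norm y ^ n / 1"
        by (intro divide_left_mono) auto
      then show "norm (norm (y ^ n / of_nat n)) \<le> norm y ^ n"
        by (simp add: norm_divide norm_power)
    qed
    show "summable (\<lambda>n. norm y ^ n)" using y by (simp add: summable_geometric)
  qed
  with S have "((\<lambda>n. y^n / of_nat n) has_sum (- Ln (1 - y))) UNIV"
    by (rule norm_summable_imp_has_sum[rotated])
  moreover have "((\<lambda>n. y^n / of_nat n) has_sum (- Ln (1 - y))) {1..} \<longleftrightarrow> ((\<lambda>n. y^n / of_nat n) has_sum (- Ln (1 - y))) UNIV"
    by (rule has_sum_cong_neutral) auto
  ultimately have H: "((\<lambda>n. y^n / of_nat n) has_sum (- Ln (1 - y))) {1..}" by simp
  have "1 - y \<notin> \<real>\<^sub>\<le>\<^sub>0"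
  proof
    assume "1 - y \<in> \<real>\<^sub>\<le>\<^sub>0"
    then have "Re (1 - y) \<le> 0" by (simp add: complex_nonpos_Reals_iff)
    moreover have "Re y < 1" using y abs_Re_le_cmod[of y] by linarith
    ultimately show False by simp
  qed
  then have "Ln (1 / (1 - y)) = - Ln (1 - y)"
    using Ln_inverse[of "1 - y"] by (simp add: inverse_eq_divide)
  with H show ?thesis by simp
qed

lemma part2a:
  fixes x :: complex assumes "norm x < 1"
  shows "((\<lambda>n. of_int (moebius n) / of_nat n * lpop M (x ^ n)) has_sum x) (pop M)"
  using core_rows[OF assms pop_sub pop_sub norm_moebius hyp_pop, of M] delta_sum[of x]
  by (simp add: lpop_def)

lemma part2b:
  fixes x :: complex assumes x: "norm x < 1"
  shows "((\<lambda>n. of_int (moebius n) / of_nat n * Ln (1 / (1 - x ^ n))) has_sum lpop M x) (pop ({p. prime p} - M))"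
proof -
  have H: "((\<lambda>n. of_int (moebius n) / of_nat n * (\<Sum>\<^sub>\<infinity>k\<in>{1..}. (x^n)^k / of_nat k)) has_sum
     (\<Sum>\<^sub>\<infinity>m\<in>{1..}. (if m \<in> pop M then 1 else 0) * x^m / of_nat m)) (pop ({p. prime p} - M))"
    by (rule core_rows[OF x pop_sub order_refl norm_moebius hyp_compl])
  have E1: "(\<Sum>\<^sub>\<infinity>m\<in>{1..}. (if m \<in> pop M then 1 else 0) * x^m / of_nat m) = lpop M x"
    unfolding lpop_def by (rule infsum_cong_neutral) (use pop_sub in auto)
  have E2: "(\<Sum>\<^sub>\<infinity>k\<in>{1..}. (x^n)^k / of_nat k) = Ln (1 / (1 - x ^ n))" if n: "n \<in> pop ({p. prime p} - M)" for n
  proof -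
    have "n \<noteq> 0" using n by (auto simp: pop_def)
    then have "norm (x ^ n) < 1" using x by (simp add: norm_power power_less_one_iff)
    then show ?thesis by (intro infsumI log_series)
  qed
  have "((\<lambda>n. of_int (moebius n) / of_nat n * Ln (1 / (1 - x ^ n))) has_sum lpop M x) (pop ({p. prime p} - M))
    \<longleftrightarrow> ((\<lambda>n. of_int (moebius n) / of_nat n * (\<Sum>\<^sub>\<infinity>k\<in>{1..}. (x^n)^k / of_nat k)) has_sum lpop M x) (pop ({p. prime p} - M))"
    by (rule has_sum_cong) (simp only: E2)
  with H show ?thesis unfolding E1 by simp
qed


lemma norm_F_le:
  fixes w a :: complex
  assumes "norm a \<le> 1" "n \<ge> 1" "k \<ge> 1"
  shows "norm (a / of_nat (n * k) * w) \<le> norm w"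
proof -
  have "n * k \<ge> 1" using assms(2,3) by (metis mult_le_mono nat_mult_1)
  then have nk: "real (n * k) \<ge> 1" by (metis of_nat_1 of_nat_le_iff)
  have "norm (a / of_nat (n * k) * w) = norm a / real (n * k) * norm w"
    by (simp add: norm_mult norm_divide)
  also have "\<dots> \<le> 1 * norm w"
  proof (rule mult_right_mono)
    show "norm a / real (n * k) \<le> 1" using assms(1) nk
      by (meson divide_le_eq_1 dual_order.trans norm_ge_zero order_less_le_trans zero_less_one)
  qed simp
  finally show ?thesis by simp
qed

lemma pow_bound2:
  fixes r \<rho> :: real assumes "0 \<le> r" "r \<le> \<rho>" "\<rho> \<le> 1" "n \<ge> 1" "k \<ge> 1"
  shows "r ^ (n * k) \<le> r * (\<rho> ^ (n - 1) * \<rho> ^ (k - 1))"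
proof -
  obtain a b where ab: "n = Suc a" "k = Suc b" using assms(4,5) by (metis Suc_le_D One_nat_def)
  have "r ^ (n * k) = r * r ^ (n * k - 1)" unfolding ab by simp
  also have "r ^ (n * k - 1) \<le> \<rho> ^ (n * k - 1)" using assms by (intro power_mono) auto
  also have "\<rho> ^ (n * k - 1) \<le> \<rho> ^ ((n - 1) + (k - 1))"
    by (rule power_decreasing) (use assms ab in auto)
  finally show ?thesis using assms(1) by (simp add: power_add mult_left_mono)
qed

lemma outer:
  fixes s :: complex and a :: "nat \<Rightarrow> complex" and M A K :: "nat set"
  assumes s: "Re s > 1" and M: "M \<subseteq> {p. prime p}" and A: "A \<subseteq> {1..}" and K: "K \<subseteq> {1..}"
    and a: "\<And>n. norm (a n) \<le> 1"
    and hyp: "\<And>m. m \<ge> 1 \<Longrightarrow> (\<Sum>n\<in>{n\<in>A. n dvd m \<and> m div n \<in> K}. a n) = (if m = 1 then 1 else 0)"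
  shows "((\<lambda>n. \<Sum>\<^sub>\<infinity>p\<in>M. a n / of_nat n * (\<Sum>\<^sub>\<infinity>k\<in>K. ((of_nat p powr (-s))^n)^k / of_nat k))
            has_sum (\<Sum>\<^sub>\<infinity>p\<in>M. of_nat p powr (-s))) A"
proof -
  define z where "z p = (of_nat p :: complex) powr (-s)" for p
  define r where "r p = real p powr (- Re s)" for p
  define \<rho> where "\<rho> = (2::real) powr (- Re s)"
  have rho: "0 \<le> \<rho>" "\<rho> < 1" unfolding \<rho>_def using s by (auto intro!: powr_less_one)
  have nz: "norm (z p) = r p" if "p \<in> M" for p
    unfolding z_def r_def by (subst norm_powr_real_powr) auto
  have rle: "r p \<le> \<rho>" if "p \<in> M" for p
  proof -
    have "p \<ge> 2" using M that prime_ge_2_nat by blast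
    then show ?thesis unfolding r_def \<rho>_def using s by (intro powr_mono2') auto
  qed
  have r0: "r p \<ge> 0" for p unfolding r_def by simp
  have zlt: "norm (z p) < 1" if "p \<in> M" for p using nz[OF that] rle[OF that] rho by simp
  have rsum: "r summable_on M"
  proof -
    have "summable (\<lambda>n. real n powr (- Re s))" using s by (subst summable_real_powr_iff) simp
    then have "((\<lambda>n. real n powr (- Re s)) has_sum (\<Sum>n. real n powr (- Re s))) UNIV"
      by (intro sums_nonneg_imp_has_sum) (auto simp: summable_sums)
    then have "r summable_on UNIV" unfolding r_def summable_on_def by blast
    then show ?thesis by (rule summable_on_subset) simp
  qed
  define \<Phi> where "\<Phi> = (\<lambda>(p,(n,k)). a n / of_nat (n*k) * (z p)^(n*k))"
  define C where "C = (\<Sum>\<^sub>\<infinity>(n,k)\<in>{1..}\<times>{1..}. \<rho> ^ (n - 1) * \<rho> ^ (k - 1))"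
  have B2: "((\<lambda>(n,k). \<rho> ^ (n - 1) * \<rho> ^ (k - 1)) has_sum C) ({1..}\<times>{1..})"
    unfolding C_def using bound2[OF rho] by simp
  have "(\<lambda>(p,(n,k)). r p * (\<rho> ^ (n - 1) * \<rho> ^ (k - 1))) summable_on Sigma M (\<lambda>_. {1..}\<times>{1..})"
  proof (rule summable_on_SigmaI[where g = "\<lambda>p. r p * C"])
    fix p assume "p \<in> M"
    show "((\<lambda>y. (\<lambda>(p,(n,k)). r p * (\<rho> ^ (n - 1) * \<rho> ^ (k - 1))) (p, y)) has_sum r p * C) ({1..}\<times>{1..})"
      using has_sum_cmult_right[OF B2, of "r p"] by (simp add: case_prod_unfold)
  next
    show "(\<lambda>p. r p * C) summable_on M" by (rule summable_on_cmult_left[OF rsum])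
  next
    fix p :: nat and y :: "nat \<times> nat" assume "p \<in> M" "y \<in> {1..}\<times>{1..}"
    then show "0 \<le> (\<lambda>(p,(n,k)). r p * (\<rho> ^ (n - 1) * \<rho> ^ (k - 1))) (p, y)"
      using r0 rho by (auto simp: case_prod_unfold)
  qed
  then have "(\<lambda>(p,(n,k)). r p * (\<rho> ^ (n - 1) * \<rho> ^ (k - 1))) summable_on Sigma M (\<lambda>_. A \<times> K)"
    by (rule summable_on_subset) (use A K in auto)
  then have "(\<lambda>x. norm (\<Phi> x)) summable_on Sigma M (\<lambda>_. A \<times> K)"
  proof (rule Infinite_Sum.abs_summable_on_comparison_test')
    fix x assume "x \<in> Sigma M (\<lambda>_. A \<times> K)"
    then obtain p n k where x: "x = (p,(n,k))" "p \<in> M" "n \<in> A" "k \<in> K" by auto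
    have nk: "n \<ge> 1" "k \<ge> 1" using x A K by auto
    have "norm (\<Phi> x) \<le> norm ((z p)^(n*k))"
      unfolding \<Phi>_def x using norm_F_le[OF a nk] by simp
    also have "\<dots> = r p ^ (n*k)" using nz[OF x(2)] by (simp add: norm_power)
    also have "\<dots> \<le> r p * (\<rho> ^ (n - 1) * \<rho> ^ (k - 1))"
      by (rule pow_bound2) (use r0 rle[OF x(2)] rho nk in auto)
    finally show "norm (\<Phi> x) \<le> (\<lambda>(p,(n,k)). r p * (\<rho> ^ (n - 1) * \<rho> ^ (k - 1))) x"
      using x by simp
  qed
  then have Phi_sum: "\<Phi> summable_on Sigma M (\<lambda>_. A \<times> K)"
    using summable_on_iff_abs_summable_on_complex by blast
  define \<Psi> where "\<Psi> = infsum \<Phi> (Sigma M (\<lambda>_. A \<times> K))"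
  have PhiS: "(\<Phi> has_sum \<Psi>) (Sigma M (\<lambda>_. A \<times> K))" unfolding \<Psi>_def using Phi_sum by simp
  have "((\<lambda>p. z p) has_sum \<Psi>) M"
  proof (rule has_sum_SigmaD[OF PhiS])
    fix p assume p: "p \<in> M"
    have "((\<lambda>(n,k). a n / of_nat (n*k) * (z p)^(n*k)) has_sum (\<Sum>\<^sub>\<infinity>m\<in>{1..}. (if m = 1 then 1 else 0) * (z p)^m / of_nat m)) (A \<times> K)"
      by (rule core[OF zlt[OF p] A K a hyp])
    then show "((\<lambda>y. \<Phi> (p, y)) has_sum z p) (A \<times> K)"
      unfolding delta_sum \<Phi>_def by (simp add: case_prod_unfold)
  qed
  then have Psi: "\<Psi> = (\<Sum>\<^sub>\<infinity>p\<in>M. of_nat p powr (-s))" unfolding z_def by (simp add: infsumI)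
  define \<Theta> where "\<Theta> = (\<lambda>(n,(p,k)). \<Phi> (p,(n,k)))"
  have "(\<Phi> has_sum \<Psi>) (Sigma M (\<lambda>_. A \<times> K)) = (\<Theta> has_sum \<Psi>) (Sigma A (\<lambda>_. M \<times> K))"
    by (rule has_sum_reindex_bij_witness[of _ "\<lambda>(n,(p,k)). (p,(n,k))" "\<lambda>(p,(n,k)). (n,(p,k))"])
       (auto simp: \<Theta>_def)
  with PhiS have ThS: "(\<Theta> has_sum \<Psi>) (Sigma A (\<lambda>_. M \<times> K))" by simp
  have ThS': "((\<lambda>(n,y). \<Theta> (n,y)) has_sum \<Psi>) (Sigma A (\<lambda>_. M \<times> K))" using ThS by simp
  have rowsum: "(\<lambda>y. \<Theta> (n,y)) summable_on (M \<times> K)" if "n \<in> A" for n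
    using summable_on_SigmaD1[OF has_sum_imp_summable[OF ThS'] that] by simp
  have "((\<lambda>n. infsum (\<lambda>y. \<Theta> (n,y)) (M \<times> K)) has_sum \<Psi>) A"
    by (rule has_sum_SigmaD[OF ThS]) (use rowsum in simp)
  moreover have "infsum (\<lambda>y. \<Theta> (n,y)) (M \<times> K) =
      (\<Sum>\<^sub>\<infinity>p\<in>M. a n / of_nat n * (\<Sum>\<^sub>\<infinity>k\<in>K. ((of_nat p powr (-s))^n)^k / of_nat k))" if n: "n \<in> A" for n
  proof -
    have "infsum (\<lambda>y. \<Theta> (n,y)) (M \<times> K) = (\<Sum>\<^sub>\<infinity>p\<in>M. \<Sum>\<^sub>\<infinity>k\<in>K. \<Theta> (n,(p,k)))"
      using infsum_Sigma_banach[OF rowsum[OF n]] by simp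
    also have "\<dots> = (\<Sum>\<^sub>\<infinity>p\<in>M. a n / of_nat n * (\<Sum>\<^sub>\<infinity>k\<in>K. ((of_nat p powr (-s))^n)^k / of_nat k))"
    proof (rule infsum_cong)
      fix p assume "p \<in> M"
      have "(\<Sum>\<^sub>\<infinity>k\<in>K. \<Theta> (n,(p,k))) = (\<Sum>\<^sub>\<infinity>k\<in>K. a n / of_nat n * (((z p)^n)^k / of_nat k))"
        by (intro infsum_cong) (simp add: \<Theta>_def \<Phi>_def power_mult)
      also have "\<dots> = a n / of_nat n * (\<Sum>\<^sub>\<infinity>k\<in>K. ((z p)^n)^k / of_nat k)"
        by (rule infsum_cmult_right')
      finally show "(\<Sum>\<^sub>\<infinity>k\<in>K. \<Theta> (n,(p,k))) = a n / of_nat n * (\<Sum>\<^sub>\<infinity>k\<in>K. ((of_nat p powr (-s))^n)^k / of_nat k)"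
        unfolding z_def .
    qed
    finally show ?thesis .
  qed
  ultimately show ?thesis unfolding Psi by (simp cong: has_sum_cong)
qed


lemma powr_nat_mult:
  fixes s :: complex assumes "p > 0"
  shows "(of_nat p :: complex) powr (- (of_nat n * s)) = (of_nat p powr (-s)) ^ n"
proof -
  have "(of_nat p :: complex) powr (- (of_nat n * s)) = exp (of_nat n * (- s * Ln (of_nat p)))"
    using assms by (simp add: powr_def mult.assoc)
  also have "\<dots> = exp (- s * Ln (of_nat p)) ^ n" by (rule exp_of_nat_mult)
  also have "\<dots> = (of_nat p powr (-s)) ^ n" using assms by (simp add: powr_def)
  finally show ?thesis .
qed

lemma norm_ps:
  fixes s :: complex assumes "Re s > 1" "prime p"
  shows "norm ((of_nat p :: complex) powr (-s)) < 1"
proof -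
  have "norm ((of_nat p :: complex) powr (-s)) = real p powr (- Re s)"
    by (subst norm_powr_real_powr) auto
  also have "\<dots> < 1" using assms prime_gt_1_nat by (intro powr_less_one) auto
  finally show ?thesis .
qed

lemma ln_inv:
  fixes y :: complex assumes y: "norm y < 1"
  shows "Ln (1 / (1 - y)) = - Ln (1 - y)"
proof -
  have "1 - y \<notin> \<real>\<^sub>\<le>\<^sub>0"
  proof
    assume "1 - y \<in> \<real>\<^sub>\<le>\<^sub>0"
    then have "Re (1 - y) \<le> 0" by (simp add: complex_nonpos_Reals_iff)
    moreover have "Re y < 1" using y abs_Re_le_cmod[of y] by linarith
    ultimately show False by simp
  qed
  then show ?thesis using Ln_inverse[of "1 - y"] by (simp add: inverse_eq_divide)
qed

lemma part1:
  fixes s :: complex assumes s: "Re s > 1" and M: "M \<subseteq> {p. prime p}"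
  shows "((\<lambda>n. of_int (moebius n) / of_nat n * lnZ M (of_nat n * s))
               has_sum (\<Sum>\<^sub>\<infinity>p\<in>M. (of_nat p) powr (-s))) {1..}"
proof -
  have H: "((\<lambda>n. \<Sum>\<^sub>\<infinity>p\<in>M. of_int (moebius n) / of_nat n * (\<Sum>\<^sub>\<infinity>k\<in>{1..}. ((of_nat p powr (-s))^n)^k / of_nat k))
            has_sum (\<Sum>\<^sub>\<infinity>p\<in>M. of_nat p powr (-s))) {1..}"
    by (rule outer[OF s M order_refl order_refl norm_moebius hyp_all])
  have E: "(\<Sum>\<^sub>\<infinity>p\<in>M. of_int (moebius n) / of_nat n * (\<Sum>\<^sub>\<infinity>k\<in>{1..}. ((of_nat p powr (-s))^n)^k / of_nat k))
      = of_int (moebius n) / of_nat n * lnZ M (of_nat n * s)" if n: "n \<in> {1..}" for n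
  proof -
    have "(\<Sum>\<^sub>\<infinity>p\<in>M. of_int (moebius n) / of_nat n * (\<Sum>\<^sub>\<infinity>k\<in>{1..}. ((of_nat p powr (-s))^n)^k / of_nat k))
        = (\<Sum>\<^sub>\<infinity>p\<in>M. of_int (moebius n) / of_nat n * (- Ln (1 - of_nat p powr (- (of_nat n * s)))))"
    proof (rule infsum_cong)
      fix p assume p: "p \<in> M"
      then have pp: "prime p" "p > 0" using M prime_gt_0_nat by auto
      have "norm ((of_nat p powr (-s)) ^ n) < 1"
        using norm_ps[OF s pp(1)] n by (simp add: norm_power power_less_one_iff)
      then have "(\<Sum>\<^sub>\<infinity>k\<in>{1..}. ((of_nat p powr (-s))^n)^k / of_nat k) = - Ln (1 - (of_nat p powr (-s))^n)"
        using log_series ln_inv infsumI by metis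
      then show "of_int (moebius n) / of_nat n * (\<Sum>\<^sub>\<infinity>k\<in>{1..}. ((of_nat p powr (-s))^n)^k / of_nat k)
          = of_int (moebius n) / of_nat n * (- Ln (1 - of_nat p powr (- (of_nat n * s))))"
        using powr_nat_mult[OF pp(2), of n s] by simp
    qed
    also have "\<dots> = of_int (moebius n) / of_nat n * (\<Sum>\<^sub>\<infinity>p\<in>M. - Ln (1 - of_nat p powr (- (of_nat n * s))))"
      by (rule infsum_cmult_right')
    also have "\<dots> = of_int (moebius n) / of_nat n * lnZ M (of_nat n * s)"
      unfolding lnZ_def by (simp add: infsum_uminus)
    finally show ?thesis .
  qed
  have "((\<lambda>n. of_int (moebius n) / of_nat n * lnZ M (of_nat n * s)) has_sum (\<Sum>\<^sub>\<infinity>p\<in>M. (of_nat p) powr (-s))) {1..}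
    \<longleftrightarrow> ((\<lambda>n. \<Sum>\<^sub>\<infinity>p\<in>M. of_int (moebius n) / of_nat n * (\<Sum>\<^sub>\<infinity>k\<in>{1..}. ((of_nat p powr (-s))^n)^k / of_nat k))
            has_sum (\<Sum>\<^sub>\<infinity>p\<in>M. of_nat p powr (-s))) {1..}"
    by (rule has_sum_cong) (simp only: E)
  with H show ?thesis by simp
qed

lemma part2c:
  fixes s :: complex assumes s: "Re s > 1" and M: "M \<subseteq> {p. prime p}"
  shows "((\<lambda>n. of_int (moebius n) / of_nat n *
                   (\<Sum>\<^sub>\<infinity>p\<in>M. lpop M ((of_nat p) powr (- (of_nat n * s)))))
               has_sum (\<Sum>\<^sub>\<infinity>p\<in>M. (of_nat p) powr (-s))) (pop M)"
proof -
  have H: "((\<lambda>n. \<Sum>\<^sub>\<infinity>p\<in>M. of_int (moebius n) / of_nat n * (\<Sum>\<^sub>\<infinity>k\<in>pop M. ((of_nat p powr (-s))^n)^k / of_nat k))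
            has_sum (\<Sum>\<^sub>\<infinity>p\<in>M. of_nat p powr (-s))) (pop M)"
    by (rule outer[OF s M pop_sub pop_sub norm_moebius hyp_pop])
  have E: "(\<Sum>\<^sub>\<infinity>p\<in>M. of_int (moebius n) / of_nat n * (\<Sum>\<^sub>\<infinity>k\<in>pop M. ((of_nat p powr (-s))^n)^k / of_nat k))
      = of_int (moebius n) / of_nat n * (\<Sum>\<^sub>\<infinity>p\<in>M. lpop M ((of_nat p) powr (- (of_nat n * s))))" for n
  proof -
    have "(\<Sum>\<^sub>\<infinity>p\<in>M. of_int (moebius n) / of_nat n * (\<Sum>\<^sub>\<infinity>k\<in>pop M. ((of_nat p powr (-s))^n)^k / of_nat k))
        = (\<Sum>\<^sub>\<infinity>p\<in>M. of_int (moebius n) / of_nat n * lpop M ((of_nat p) powr (- (of_nat n * s))))"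
    proof (rule infsum_cong)
      fix p assume p: "p \<in> M"
      then have pp: "p > 0" using M prime_gt_0_nat by auto
      show "of_int (moebius n) / of_nat n * (\<Sum>\<^sub>\<infinity>k\<in>pop M. ((of_nat p powr (-s))^n)^k / of_nat k)
          = of_int (moebius n) / of_nat n * lpop M ((of_nat p) powr (- (of_nat n * s)))"
        unfolding lpop_def using powr_nat_mult[OF pp, of n s] by simp
    qed
    also have "\<dots> = of_int (moebius n) / of_nat n * (\<Sum>\<^sub>\<infinity>p\<in>M. lpop M ((of_nat p) powr (- (of_nat n * s))))"
      by (rule infsum_cmult_right')
    finally show ?thesis .
  qed
  show ?thesis using H unfolding E .
qed

theorem mainTheorem8:
  fixes M :: "nat set"
  assumes "M \<subseteq> {p. prime p}"
  shows "(\<forall>s::complex. Re s > 1 \<longrightarrow>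
            ((\<lambda>n. of_int (moebius n) / of_nat n * lnZ M (of_nat n * s))
               has_sum (\<Sum>\<^sub>\<infinity>p\<in>M. (of_nat p) powr (-s))) {1..})
       \<and> (\<forall>x::complex. norm x < 1 \<longrightarrow>
            ((\<lambda>n. of_int (moebius n) / of_nat n * lpop M (x ^ n)) has_sum x) (pop M))
       \<and> (\<forall>x::complex. norm x < 1 \<longrightarrow>
            ((\<lambda>n. of_int (moebius n) / of_nat n * Ln (1 / (1 - x ^ n)))
               has_sum lpop M x) (pop ({p. prime p} - M)))
       \<and> (\<forall>s::complex. Re s > 1 \<longrightarrow>
            ((\<lambda>n. of_int (moebius n) / of_nat n *
                   (\<Sum>\<^sub>\<infinity>p\<in>M. lpop M ((of_nat p) powr (- (of_nat n * s)))))
               has_sum (\<Sum>\<^sub>\<infinity>p\<in>M. (of_nat p) powr (-s))) (pop M))"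
  using part1[OF _ assms] part2a part2b part2c[OF _ assms] by blast

end
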